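(* Consider the network model with interest-based mobility described in the context, where the angle $\alpha=\angle(S,D)$ is uniformly distributed on $[0,\pi/2]$, and the routing FM$^0$ in which $S$ can only deliver the message directly to $D$ (at the first meeting of $S$ and $D$). Let $T_{FM^0}$ be the delivery time, so that $\mathbb{E}[T_{FM^0}]=\int_0^{\pi/2}\frac{2}{\pi}\cdot\frac{1}{k\cos\alpha+\delta}\,d\alpha$. Then $\mathbb{E}[T_{FM^0}]=\Omega(\log(1/\delta))$, i.e. there is a constant $c>0$ with $\mathbb{E}[T_{FM^0}]\ge c\log(1/\delta(n))$ for all sufficiently large $n$.
   Context: Interest profiles of $S$ and $D$ are unit vectors in the closed positive orthant of the unit sphere of $\mathbb{R}^m$; $S=(1,0,\dots,0)$ and the angle $\angle(S,D)$ is uniform on $[0,\pi/2]$. Conditional on the profiles, the meeting instants of $S$ and $D$ form a Poisson process of rate $\lambda_{SD}=k\cos\angle(S,D)+\delta$ (interest-based mobility), where $\lambda>0$ is a fixed constant, $\delta=\delta(n)>0$ with $\delta(n)\to0$, and $k=\frac{\pi}{2}(\lambda-\delta)$. *)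

theory Defs
  imports "HOL-Analysis.Analysis"
begin

text \<open>Meeting rate of S and D as a function of the angle a between their interest
  profiles: lambda_SD = k cos a + delta, with k = (pi/2)(lambda - delta).\<close>
definition meet_rate :: "real \<Rightarrow> real \<Rightarrow> real \<Rightarrow> real" where
  "meet_rate lam del a = (pi / 2) * (lam - del) * cos a + del"

text \<open>Expected delivery time of FM^0 (direct delivery at first meeting): conditional on
  the angle a the delivery time is exponential with mean 1/(k cos a + delta), and the
  angle is uniform on [0, pi/2] with density 2/pi.\<close>
definition ET_FM0 :: "real \<Rightarrow> real \<Rightarrow> real" where
  "ET_FM0 lam del = integral {0..pi/2} (\<lambda>a. (2 / pi) * (1 / meet_rate lam del a))"

end

theory Submission
  imports Defs
begin

lemma key:
  fixes lam d :: real
  assumes lp: "lam > 0" and dp: "d > 0" and dl: "d < lam"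
  shows "ET_FM0 lam d \<ge> (4 / (pi^2 * lam)) * ln (lam / d)"
proof -
  define k where "k = pi/2 * (lam - d)"
  have kp: "k > 0" using dl by (simp add: k_def)
  have mr: "meet_rate lam d a = k * cos a + d" for a by (simp add: meet_rate_def k_def)
  define g where "g a = (2/pi) * (1 / (k * (pi/2 - a) + d))" for a
  define G where "G a = -(2/(pi*k)) * ln (k * (pi/2 - a) + d)" for a
  have posg: "k * (pi/2 - a) + d > 0" if "a \<in> {0..pi/2}" for a
    using that kp dp by (auto intro!: add_nonneg_pos)
  have der: "(G has_vector_derivative g a) (at a within {0..pi/2})" if "a \<in> {0..pi/2}" for a
  proof -
    have "(G has_real_derivative (-(2/(pi*k))) * ((-k) / (k * (pi/2 - a) + d))) (at a)"
      unfolding G_def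
      by (rule derivative_eq_intros refl | use posg[OF that] in simp)+
    moreover have "(-(2/(pi*k))) * ((-k) / (k * (pi/2 - a) + d)) = g a"
      using kp by (simp add: g_def field_simps)
    ultimately show ?thesis
      by (simp add: has_real_derivative_iff_has_vector_derivative[symmetric] has_field_derivative_at_within)
  qed
  have gi: "(g has_integral (G (pi/2) - G 0)) {0..pi/2}"
    by (rule fundamental_theorem_of_calculus) (use der in auto)
  have cpos: "k * cos a + d > 0" if "a \<in> {0..pi/2}" for a
    using that kp dp cos_ge_zero[of a] by (auto intro!: add_nonneg_pos)
  have fi: "(\<lambda>a. (2 / pi) * (1 / meet_rate lam d a)) integrable_on {0..pi/2}"
    unfolding mr
    by (rule integrable_continuous_interval, intro continuous_intros) (use cpos in force)
  have le: "g a \<le> (2 / pi) * (1 / meet_rate lam d a)" if "a \<in> {0..pi/2}" for a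
  proof -
    have "cos a = sin (pi/2 - a)" by (simp add: sin_cos_eq)
    also have "\<dots> \<le> pi/2 - a" by (rule sin_x_le_x) (use that in auto)
    finally have "k * cos a + d \<le> k * (pi/2 - a) + d" using kp by simp
    hence "1 / (k * (pi/2 - a) + d) \<le> 1 / (k * cos a + d)"
      using cpos[OF that] by (simp add: frac_le)
    hence "(2/pi) * (1 / (k * (pi/2 - a) + d)) \<le> (2/pi) * (1 / (k * cos a + d))"
      by (intro mult_left_mono) auto
    thus ?thesis unfolding g_def mr .
  qed
  have "G (pi/2) - G 0 \<le> ET_FM0 lam d"
    unfolding ET_FM0_def
    using integral_le[OF has_integral_integrable[OF gi] fi le] integral_unique[OF gi]
    by simp
  moreover have "G (pi/2) - G 0 = (2/(pi*k)) * ln ((k*pi/2 + d)/d)"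
  proof -
    have "k*pi/2 + d > 0" using kp dp by (simp add: add_pos_pos)
    hence "ln ((k*pi/2 + d)/d) = ln (k*pi/2 + d) - ln d" using dp by (simp add: ln_div)
    moreover have "G (pi/2) - G 0 = (2/(pi*k)) * (ln (k*pi/2 + d) - ln d)"
      by (simp add: G_def right_diff_distrib mult.commute mult.left_commute)
    ultimately show ?thesis by simp
  qed
  moreover have "k*pi/2 + d \<ge> lam"
  proof -
    have "pi*pi \<ge> 3*3" using pi_gt3 by (intro mult_mono) auto
    hence "pi^2/4 \<ge> 1" by (simp add: power2_eq_square)
    hence "(pi^2/4 - 1) * d \<le> (pi^2/4 - 1) * lam" using dl by (intro mult_left_mono) auto
    thus ?thesis by (simp add: k_def power2_eq_square algebra_simps add_divide_distrib diff_divide_distrib)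
  qed
  hence "ln ((k*pi/2 + d)/d) \<ge> ln (lam / d)"
    using dp lp by (intro ln_mono) (auto simp: divide_right_mono)
  moreover have "ln (lam/d) \<ge> 0" using dl dp by simp
  moreover have "2/(pi*k) \<ge> 4 / (pi^2*lam)"
  proof -
    have "pi*k \<le> pi*(pi/2*lam)" using dp by (simp add: k_def)
    hence "2/(pi*k) \<ge> 2/(pi*(pi/2*lam))" using kp by (intro divide_left_mono) auto
    thus ?thesis by (simp add: power2_eq_square)
  qed
  ultimately show ?thesis
    using mult_mono[of "4 / (pi^2*lam)" "2/(pi*k)" "ln (lam / d)" "ln ((k*pi/2 + d)/d)"] kp
    by simp
qed

theorem lemma8:
  fixes lam :: real and del :: "nat \<Rightarrow> real"
  assumes "lam > 0"
    and "\<And>n. del n > 0"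
    and "del \<longlonglongrightarrow> 0"
  shows "\<exists>c>0. \<forall>\<^sub>F n in sequentially. ET_FM0 lam (del n) \<ge> c * ln (1 / del n)"
proof (intro exI conjI)
  show "2 / (pi^2 * lam) > 0" using assms(1) by simp
  have m: "min lam (lam^2) > 0" using assms(1) by simp
  have ev: "\<forall>\<^sub>F n in sequentially. del n < min lam (lam^2)"
    using order_tendstoD(2)[OF assms(3) m] .
  show "\<forall>\<^sub>F n in sequentially. ET_FM0 lam (del n) \<ge> 2 / (pi^2 * lam) * ln (1 / del n)"
    using ev
  proof eventually_elim
    case (elim n)
    define d where "d = del n"
    have dp: "d > 0" using assms(2) by (simp add: d_def)
    have dl: "d < lam" "d < lam^2" using elim by (auto simp: d_def)
    have K: "ET_FM0 lam d \<ge> (4 / (pi^2 * lam)) * ln (lam / d)"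
      by (rule key[OF assms(1) dp dl(1)])
    have "ln d \<le> ln (lam^2)" using dp dl by simp
    hence "ln d \<le> 2 * ln lam" using assms(1) by (simp add: ln_realpow)
    hence "ln (1/d) \<le> 2 * ln (lam / d)" using dp assms(1) by (simp add: ln_div)
    hence "2 / (pi^2 * lam) * ln (1/d) \<le> 2 / (pi^2 * lam) * (2 * ln (lam / d))"
      using assms(1) by (intro mult_left_mono) auto
    also have "\<dots> = (4 / (pi^2 * lam)) * ln (lam / d)" by simp
    finally show ?case using K by (simp add: d_def)
  qed
qed

end
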